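(* Let $\ket\psi$ be a pure $n$-qubit state, $t\ge1$, $\bm s\in\{0,1\}^n$. Consider the $t$-copy swap test for $\bm s$: a single ancilla qubit initialized to $\ket0$ and a state register $(\ket\psi\ket\psi)^{\otimes t}$; apply a Hadamard to the ancilla, then the controlled unitary $\ket0\bra0\otimes I+\ket1\bra1\otimes\mathrm{SWAP}_{\bm s}^{\otimes t}$, then a Hadamard to the ancilla, and measure the ancilla, obtaining a bit $x$. Then $x$ is a Bernoulli random variable with $\Pr(x=1)=\frac12(1-P(\bm s)^t)$, and $x$ has the same distribution as $\bm x\cdot\bm s$ with $\bm x\sim p_t$. Consequently, for each $m\ge1$, the estimator $1-\frac2m\sum_{k=1}^m x_k$ built from $m$ i.i.d. swap-test outcomes has the same distribution as $\widehat{P^t}(\bm s)=1-\frac2m\sum_{k=1}^m \bm x_k\cdot\bm s$ built from $m$ i.i.d. samples $\bm x_k\sim p_t$.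
   Context: Subsystems are bitstrings $\bm s\in\{0,1\}^n$ (qubit $j$ included iff $s_j=1$); $\bm x\cdot\bm s\in\{0,1\}$ is the dot product mod 2. $\rho_{\bm s}=\mathrm{Tr}_{\bar{\bm s}}\ket\psi\bra\psi$ and $P(\bm s)=\mathrm{Tr}(\rho_{\bm s}^2)$ (with $P(\bm 0)=1$). $\mathrm{SWAP}_{\bm s}$ swaps the qubits of subsystem $\bm s$ between two copies of the $n$-qubit space. The $t$-copy hidden cut circuit: an $n$-qubit group register is initialized to $\ket{0^n}$ and a state register to $(\ket\psi\ket\psi)^{\otimes t}$; apply $H^{\otimes n}$ to the group register; apply $\sum_{\bm s}\ket{\bm s}\bra{\bm s}\otimes \mathrm{SWAP}_{\bm s}^{\otimes t}$; apply $H^{\otimes n}$ to the group register; measure the group register in the computational basis; $p_t$ denotes the resulting distribution. *)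

theory Defs
  imports "HOL-Analysis.Analysis" "HOL-Probability.Probability"
begin

(* Computational basis states of k qubits: boolean lists of length k
   (True = |1>).  A subsystem s of n qubits is also a bool list of length n,
   qubit j included iff s!j. *)
definition qubits :: "nat \<Rightarrow> bool list set" where
  "qubits k = {x. length x = k}"

definition dotb :: "bool list \<Rightarrow> bool list \<Rightarrow> bool" where
  "dotb x s = odd (card {j. j < length x \<and> j < length s \<and> x ! j \<and> s ! j})"

definition sgn_bit :: "bool \<Rightarrow> complex" where
  "sgn_bit b = (if b then -1 else 1)"

definition mix :: "bool list \<Rightarrow> bool list \<Rightarrow> bool list \<Rightarrow> bool list" where
  "mix s u v = map (\<lambda>(c, x, y). if c then x else y) (zip s (zip u v))"

(* representatives of basis states of subsystem s: qubits outside s set to 0 *)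
definition sub_basis :: "bool list \<Rightarrow> bool list set" where
  "sub_basis s = {a \<in> qubits (length s). \<forall>j < length s. \<not> s ! j \<longrightarrow> \<not> a ! j}"

(* reduced density matrix rho_s = Tr_{complement of s} |psi><psi| *)
definition rho :: "(bool list \<Rightarrow> complex) \<Rightarrow> bool list \<Rightarrow> bool list \<Rightarrow> bool list \<Rightarrow> complex" where
  "rho psi s a a' = (\<Sum>b \<in> sub_basis (map Not s). psi (mix s a b) * cnj (psi (mix s a' b)))"

(* purity P(s) = Tr(rho_s^2) (a real number; we take the real part of the trace) *)
definition purity :: "(bool list \<Rightarrow> complex) \<Rightarrow> bool list \<Rightarrow> real" where
  "purity psi s = Re (\<Sum>a \<in> sub_basis s. \<Sum>a' \<in> sub_basis s. rho psi s a a' * rho psi s a' a)"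

(* State register (|psi>|psi>)^{\<otimes> t}: basis states are lists of t pairs of n-qubit basis states *)
definition regs :: "nat \<Rightarrow> nat \<Rightarrow> (bool list \<times> bool list) list set" where
  "regs n t = {r. length r = t \<and> (\<forall>(a, b) \<in> set r. length a = n \<and> length b = n)}"

definition psi_reg :: "(bool list \<Rightarrow> complex) \<Rightarrow> (bool list \<times> bool list) list \<Rightarrow> complex" where
  "psi_reg psi r = prod_list (map (\<lambda>(a, b). psi a * psi b) r)"

definition swap_pair :: "bool list \<Rightarrow> bool list \<times> bool list \<Rightarrow> bool list \<times> bool list" where
  "swap_pair s ab = (mix s (snd ab) (fst ab), mix s (fst ab) (snd ab))"

definition swap_t :: "bool list \<Rightarrow> (bool list \<times> bool list) list \<Rightarrow> (bool list \<times> bool list) list" where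
  "swap_t s r = map (swap_pair s) r"

(* Action of SWAP_s^{\<otimes> t} (a basis permutation sigma, an involution) on an
   amplitude vector: (U phi)(r) = phi(sigma^{-1} r) = phi(sigma r). *)

(* joint states: amplitude functions on (ancilla bit, register basis state) *)
definition had_anc :: "(bool \<times> 'r \<Rightarrow> complex) \<Rightarrow> (bool \<times> 'r \<Rightarrow> complex)" where
  "had_anc phi = (\<lambda>(b, r). (phi (False, r) + sgn_bit b * phi (True, r)) / complex_of_real (sqrt 2))"

definition ctrl_swap :: "bool list \<Rightarrow> (bool \<times> (bool list \<times> bool list) list \<Rightarrow> complex)
    \<Rightarrow> (bool \<times> (bool list \<times> bool list) list \<Rightarrow> complex)" where
  "ctrl_swap s phi = (\<lambda>(b, r). if b then phi (True, swap_t s r) else phi (False, r))"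

definition swap_test_init :: "(bool list \<Rightarrow> complex) \<Rightarrow> bool \<times> (bool list \<times> bool list) list \<Rightarrow> complex" where
  "swap_test_init psi = (\<lambda>(b, r). if b then 0 else psi_reg psi r)"

definition swap_test_final :: "(bool list \<Rightarrow> complex) \<Rightarrow> bool list \<Rightarrow> bool \<times> (bool list \<times> bool list) list \<Rightarrow> complex" where
  "swap_test_final psi s = had_anc (ctrl_swap s (had_anc (swap_test_init psi)))"

definition swap_test_prob :: "nat \<Rightarrow> nat \<Rightarrow> (bool list \<Rightarrow> complex) \<Rightarrow> bool list \<Rightarrow> bool \<Rightarrow> real" where
  "swap_test_prob n t psi s x = (\<Sum>r \<in> regs n t. (cmod (swap_test_final psi s (x, r)))\<^sup>2)"

definition had_grp :: "nat \<Rightarrow> (bool list \<times> 'r \<Rightarrow> complex) \<Rightarrow> (bool list \<times> 'r \<Rightarrow> complex)" where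
  "had_grp n phi = (\<lambda>(g, r). (\<Sum>y \<in> qubits n. sgn_bit (dotb g y) * phi (y, r))
      / complex_of_real (sqrt (2 ^ n)))"

definition ctrl_swap_grp :: "(bool list \<times> (bool list \<times> bool list) list \<Rightarrow> complex)
    \<Rightarrow> (bool list \<times> (bool list \<times> bool list) list \<Rightarrow> complex)" where
  "ctrl_swap_grp phi = (\<lambda>(g, r). phi (g, swap_t g r))"

definition hidden_cut_init :: "nat \<Rightarrow> (bool list \<Rightarrow> complex) \<Rightarrow> bool list \<times> (bool list \<times> bool list) list \<Rightarrow> complex" where
  "hidden_cut_init n psi = (\<lambda>(g, r). if g = replicate n False then psi_reg psi r else 0)"

definition hidden_cut_final :: "nat \<Rightarrow> (bool list \<Rightarrow> complex) \<Rightarrow> bool list \<times> (bool list \<times> bool list) list \<Rightarrow> complex" where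
  "hidden_cut_final n psi = had_grp n (ctrl_swap_grp (had_grp n (hidden_cut_init n psi)))"

definition p_t :: "nat \<Rightarrow> nat \<Rightarrow> (bool list \<Rightarrow> complex) \<Rightarrow> bool list \<Rightarrow> real" where
  "p_t n t psi x = (if x \<in> qubits n then (\<Sum>r \<in> regs n t. (cmod (hidden_cut_final n psi (x, r)))\<^sup>2) else 0)"

definition swap_test_pmf :: "nat \<Rightarrow> nat \<Rightarrow> (bool list \<Rightarrow> complex) \<Rightarrow> bool list \<Rightarrow> bool pmf" where
  "swap_test_pmf n t psi s = embed_pmf (swap_test_prob n t psi s)"

definition p_t_pmf :: "nat \<Rightarrow> nat \<Rightarrow> (bool list \<Rightarrow> complex) \<Rightarrow> bool list pmf" where
  "p_t_pmf n t psi = embed_pmf (p_t n t psi)"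

end

theory Submission
  imports Defs
begin


lemma dotb_Nil1[simp]: "dotb [] z = False" by (simp add: dotb_def)
lemma dotb_Nil2[simp]: "dotb x [] = False" by (simp add: dotb_def)

lemma dotb_Cons[simp]: "dotb (d # x) (c # z) = ((d \<and> c) \<noteq> dotb x z)"
proof -
  let ?S = "{j. j < length x \<and> j < length z \<and> x ! j \<and> z ! j}"
  have eq: "{j. j < length (d#x) \<and> j < length (c#z) \<and> (d#x) ! j \<and> (c#z) ! j}
      = (if d \<and> c then {0} else {}) \<union> Suc ` ?S"
    by (auto simp: image_iff nth_Cons split: nat.splits if_splits) (metis Suc_pred gr0I)+
  have fin: "finite ?S" by simp
  have "0 \<notin> Suc ` ?S" by auto
  then have "card ((if d \<and> c then {0} else {}) \<union> Suc ` ?S) = (if d \<and> c then 1 else 0) + card ?S"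
    using fin by (auto simp: card_image)
  then show ?thesis unfolding dotb_def eq by auto
qed

lemma qubits_0: "qubits 0 = {[]}" by (auto simp: qubits_def)
lemma qubits_Suc: "qubits (Suc n) = (\<lambda>(d, x). d # x) ` (UNIV \<times> qubits n)"
  by (auto simp: qubits_def image_iff length_Suc_conv)
lemma finite_qubits[simp]: "finite (qubits n)"
  by (induction n) (auto simp: qubits_0 qubits_Suc)

lemma sum_qubits_Suc: "(\<Sum>x\<in>qubits (Suc n). f x) = (\<Sum>d\<in>UNIV. \<Sum>x\<in>qubits n. f (d # x))"
proof -
  have "inj_on (\<lambda>(d, x). d # x) (UNIV \<times> qubits n)" by (auto simp: inj_on_def)
  then show ?thesis unfolding qubits_Suc by (simp add: sum.reindex sum.cartesian_product[of "\<lambda>d x. f (d # x)"] case_prod_unfold)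
qed

lemma regs_0: "regs n 0 = {[]}" by (auto simp: regs_def)
lemma regs_Suc: "regs n (Suc t) = (\<lambda>(p, r). p # r) ` ((qubits n \<times> qubits n) \<times> regs n t)"
  by (fastforce simp: regs_def qubits_def image_iff length_Suc_conv)
lemma finite_regs[simp]: "finite (regs n t)"
  by (induction t) (auto simp: regs_0 regs_Suc)

lemma sum_regs_prod:
  fixes h :: "bool list \<times> bool list \<Rightarrow> 'a::comm_semiring_1"
  shows "(\<Sum>r\<in>regs n t. prod_list (map h r)) = (\<Sum>p\<in>qubits n \<times> qubits n. h p) ^ t"
proof (induction t)
  case 0 then show ?case by (simp add: regs_0)
next
  case (Suc t)
  have "inj_on (\<lambda>(p, r). p # r) ((qubits n \<times> qubits n) \<times> regs n t)" by (auto simp: inj_on_def)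
  then have "(\<Sum>r\<in>regs n (Suc t). prod_list (map h r))
     = (\<Sum>(p, r)\<in>(qubits n \<times> qubits n) \<times> regs n t. h p * prod_list (map h r))"
    unfolding regs_Suc by (simp add: sum.reindex case_prod_unfold)
  also have "\<dots> = (\<Sum>p\<in>qubits n \<times> qubits n. h p) * (\<Sum>r\<in>regs n t. prod_list (map h r))"
    by (simp add: sum_product sum.cartesian_product)
  finally show ?case using Suc by simp
qed

lemma prod_list_cnj: "prod_list (map f r) * cnj (prod_list (map g r)) = prod_list (map (\<lambda>p. f p * cnj (g p)) r)"
  by (induction r) (auto simp: algebra_simps)

lemma length_mix[simp]: "length (mix s u v) = min (length s) (min (length u) (length v))"
  by (simp add: mix_def)
lemma nth_mix[simp]: "j < length s \<Longrightarrow> j < length u \<Longrightarrow> j < length v \<Longrightarrow> mix s u v ! j = (if s ! j then u ! j else v ! j)"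
  by (simp add: mix_def)

definition xorl :: "bool list \<Rightarrow> bool list \<Rightarrow> bool list" where
  "xorl y z = map (\<lambda>(a, b). a \<noteq> b) (zip y z)"

lemma length_xorl[simp]: "length (xorl y z) = min (length y) (length z)" by (simp add: xorl_def)
lemma nth_xorl[simp]: "j < length y \<Longrightarrow> j < length z \<Longrightarrow> xorl y z ! j = (y ! j \<noteq> z ! j)" by (simp add: xorl_def)

lemma xorl_Cons[simp]: "xorl (a # y) (b # z) = (a \<noteq> b) # xorl y z" by (simp add: xorl_def)

lemma dotb_xorl: "x \<in> qubits n \<Longrightarrow> y \<in> qubits n \<Longrightarrow> z \<in> qubits n \<Longrightarrow> dotb x (xorl y z) = (dotb x y \<noteq> dotb x z)"
proof (induction n arbitrary: x y z)
  case 0 then show ?case by (auto simp: qubits_0)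
next
  case (Suc n)
  then obtain d x' c y' e z' where "x = d # x'" "y = c # y'" "z = e # z'" "x' \<in> qubits n" "y' \<in> qubits n" "z' \<in> qubits n"
    by (auto simp: qubits_Suc)
  with Suc.IH[of x' y' z'] show ?case by auto
qed

lemma xorl_in[simp]: "y \<in> qubits n \<Longrightarrow> z \<in> qubits n \<Longrightarrow> xorl y z \<in> qubits n" by (simp add: qubits_def)
lemma xorl_xorl: "y \<in> qubits n \<Longrightarrow> z \<in> qubits n \<Longrightarrow> xorl y (xorl y z) = z"
  by (auto simp: qubits_def intro!: nth_equalityI)
lemma xorl_comm: "xorl y z = xorl z y" by (auto intro!: nth_equalityI)
lemma xorl_self: "y \<in> qubits n \<Longrightarrow> xorl y y = replicate n False"
  by (auto simp: qubits_def intro!: nth_equalityI)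
lemma xorl_eq0: "y \<in> qubits n \<Longrightarrow> z \<in> qubits n \<Longrightarrow> xorl y z = replicate n False \<longleftrightarrow> y = z"
  by (metis xorl_self xorl_xorl xorl_comm xorl_in) 

lemma zero_in[simp]: "replicate n False \<in> qubits n" by (simp add: qubits_def)
lemma dotb_zero[simp]: "dotb g (replicate n False) = False"
proof -
  have "{j. j < length g \<and> j < length (replicate n False) \<and> g ! j \<and> replicate n False ! j} = {}" by auto
  then show ?thesis unfolding dotb_def by (simp only:) simp
qed

lemma sum_xorl_reindex:
  assumes "y \<in> qubits n"
  shows "(\<Sum>y'\<in>qubits n. F (xorl y y')) = (\<Sum>z\<in>qubits n. F z)"
  by (rule sum.reindex_bij_witness[of _ "xorl y" "xorl y"]) (use assms xorl_xorl in auto)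



definition pp :: "(bool list \<Rightarrow> complex) \<Rightarrow> bool list \<times> bool list \<Rightarrow> complex" where
  "pp psi = (\<lambda>(a, b). psi a * psi b)"

definition Yf :: "nat \<Rightarrow> (bool list \<Rightarrow> complex) \<Rightarrow> bool list \<Rightarrow> complex" where
  "Yf n psi z = (\<Sum>p\<in>qubits n \<times> qubits n. pp psi p * cnj (pp psi (swap_pair z p)))"

lemma swap_pair_in:
  "z \<in> qubits n \<Longrightarrow> p \<in> qubits n \<times> qubits n \<Longrightarrow> swap_pair z p \<in> qubits n \<times> qubits n"
  by (auto simp: swap_pair_def qubits_def)

lemma swap_pair_invol:
  "z \<in> qubits n \<Longrightarrow> p \<in> qubits n \<times> qubits n \<Longrightarrow> swap_pair z (swap_pair z p) = p"
  by (cases p) (auto simp: swap_pair_def qubits_def split: if_splits intro!: nth_equalityI)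

lemma swap_pair_comp:
  "y \<in> qubits n \<Longrightarrow> y' \<in> qubits n \<Longrightarrow> p \<in> qubits n \<times> qubits n \<Longrightarrow>
    swap_pair y' (swap_pair y p) = swap_pair (xorl y y') p"
  by (cases p) (auto simp: swap_pair_def qubits_def intro!: nth_equalityI)

lemma swap_pair_zero:
  "p \<in> qubits n \<times> qubits n \<Longrightarrow> swap_pair (replicate n False) p = p"
  by (cases p) (auto simp: swap_pair_def qubits_def intro!: nth_equalityI)

lemma sum_swap_pair_reindex:
  assumes "z \<in> qubits n"
  shows "(\<Sum>p\<in>qubits n \<times> qubits n. F (swap_pair z p)) = (\<Sum>p\<in>qubits n \<times> qubits n. F p)"
  by (rule sum.reindex_bij_witness[of _ "swap_pair z" "swap_pair z"])
     (use assms swap_pair_invol swap_pair_in in auto)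

lemma Yf_real: assumes "z \<in> qubits n" shows "cnj (Yf n psi z) = Yf n psi z"
proof -
  have "cnj (Yf n psi z) = (\<Sum>p\<in>qubits n \<times> qubits n. cnj (pp psi p) * pp psi (swap_pair z p))"
    by (simp add: Yf_def)
  also have "\<dots> = (\<Sum>p\<in>qubits n \<times> qubits n. cnj (pp psi (swap_pair z p)) * pp psi (swap_pair z (swap_pair z p)))"
    by (rule sum_swap_pair_reindex[OF assms, symmetric])
  also have "\<dots> = Yf n psi z"
    unfolding Yf_def by (rule sum.cong) (use assms swap_pair_invol in auto)
  finally show ?thesis .
qed

lemma Yf_of_real: assumes "z \<in> qubits n" shows "Yf n psi z = of_real (Re (Yf n psi z))"
proof -
  have "Im (cnj (Yf n psi z)) = Im (Yf n psi z)" using Yf_real[OF assms, of psi] by simp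
  then have "Im (Yf n psi z) = 0" by simp
  then show ?thesis by (simp add: complex_eq_iff)
qed

lemma Yf_zero:
  assumes norm: "(\<Sum>x \<in> qubits n. (cmod (psi x))\<^sup>2) = 1"
  shows "Yf n psi (replicate n False) = 1"
proof -
  have "Yf n psi (replicate n False) = (\<Sum>p\<in>qubits n \<times> qubits n. pp psi p * cnj (pp psi p))"
    unfolding Yf_def by (rule sum.cong) (auto simp: swap_pair_zero)
  also have "\<dots> = (\<Sum>p\<in>qubits n \<times> qubits n. of_real ((cmod (psi (fst p)))\<^sup>2) * of_real ((cmod (psi (snd p)))\<^sup>2))"
  proof (rule sum.cong)
    fix x :: "bool list \<times> bool list"
    obtain a b where x: "x = (a, b)" by (cases x)
    have "psi a * psi b * cnj (psi a * psi b) = of_real ((cmod (psi a))\<^sup>2) * of_real ((cmod (psi b))\<^sup>2)"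
      unfolding complex_norm_square by (simp add: algebra_simps)
    then show "pp psi x * cnj (pp psi x) = of_real ((cmod (psi (fst x)))\<^sup>2) * of_real ((cmod (psi (snd x)))\<^sup>2)"
      by (simp add: x pp_def)
  qed simp
  also have "\<dots> = (\<Sum>a\<in>qubits n. \<Sum>b\<in>qubits n. of_real ((cmod (psi a))\<^sup>2) * of_real ((cmod (psi b))\<^sup>2))"
    by (simp add: sum.cartesian_product case_prod_unfold)
  also have "\<dots> = of_real ((\<Sum>a\<in>qubits n. (cmod (psi a))\<^sup>2) * (\<Sum>b\<in>qubits n. (cmod (psi b))\<^sup>2))"
    by (simp add: sum_product)
  finally show ?thesis using norm by simp
qed

lemma psi_reg_swap: "psi_reg psi (swap_t y r) = prod_list (map (\<lambda>p. pp psi (swap_pair y p)) r)"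
  by (simp add: psi_reg_def swap_t_def pp_def o_def)

lemma sum_regs_swap:
  assumes "y \<in> qubits n" "y' \<in> qubits n"
  shows "(\<Sum>r\<in>regs n t. psi_reg psi (swap_t y r) * cnj (psi_reg psi (swap_t y' r))) = Yf n psi (xorl y y') ^ t"
proof -
  have "(\<Sum>r\<in>regs n t. psi_reg psi (swap_t y r) * cnj (psi_reg psi (swap_t y' r)))
     = (\<Sum>p\<in>qubits n \<times> qubits n. pp psi (swap_pair y p) * cnj (pp psi (swap_pair y' p))) ^ t"
    by (simp add: psi_reg_swap prod_list_cnj sum_regs_prod)
  also have "(\<Sum>p\<in>qubits n \<times> qubits n. pp psi (swap_pair y p) * cnj (pp psi (swap_pair y' p)))
     = (\<Sum>p\<in>qubits n \<times> qubits n. pp psi (swap_pair y p) * cnj (pp psi (swap_pair y' (swap_pair y (swap_pair y p)))))"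
    by (rule sum.cong) (use assms swap_pair_invol in auto)
  also have "\<dots> = (\<Sum>p\<in>qubits n \<times> qubits n. pp psi p * cnj (pp psi (swap_pair y' (swap_pair y p))))"
    by (rule sum_swap_pair_reindex[OF assms(1)])
  also have "\<dots> = Yf n psi (xorl y y')"
    unfolding Yf_def by (rule sum.cong) (use assms swap_pair_comp in auto)
  finally show ?thesis .
qed

lemma swap_t_zero: "r \<in> regs n t \<Longrightarrow> swap_t (replicate n False) r = r"
  unfolding swap_t_def regs_def
  by (rule map_idI) (use swap_pair_zero[of _ n] in \<open>auto simp: qubits_def\<close>)



definition mask :: "bool list \<Rightarrow> bool list \<Rightarrow> bool list" where
  "mask c a = map (\<lambda>(c, x). c \<and> x) (zip c a)"

lemma length_mask[simp]: "length (mask c a) = min (length c) (length a)" by (simp add: mask_def)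
lemma nth_mask[simp]: "j < length c \<Longrightarrow> j < length a \<Longrightarrow> mask c a ! j = (c ! j \<and> a ! j)" by (simp add: mask_def)

lemma sub_basis_len: "a \<in> sub_basis s \<Longrightarrow> length a = length s" by (simp add: sub_basis_def qubits_def)
lemma finite_sub_basis[simp]: "finite (sub_basis s)"
  by (rule finite_subset[of _ "qubits (length s)"]) (auto simp: sub_basis_def)

lemma sum_split_sub:
  assumes s: "s \<in> qubits n"
  shows "(\<Sum>a\<in>qubits n. f a) = (\<Sum>\<alpha>\<in>sub_basis s. \<Sum>\<beta>\<in>sub_basis (map Not s). f (mix s \<alpha> \<beta>))"
proof -
  have ls: "length s = n" using s by (simp add: qubits_def)
  have "(\<Sum>a\<in>qubits n. f a) = (\<Sum>p\<in>sub_basis s \<times> sub_basis (map Not s). f (mix s (fst p) (snd p)))"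
  proof (rule sum.reindex_bij_witness[of _ "\<lambda>p. mix s (fst p) (snd p)" "\<lambda>a. (mask s a, mask (map Not s) a)"])
    fix a assume "a \<in> qubits n"
    then show *: "mix s (fst (mask s a, mask (map Not s) a)) (snd (mask s a, mask (map Not s) a)) = a"
      using ls by (auto simp: qubits_def split: if_splits intro!: nth_equalityI)
    then show "f (mix s (fst (mask s a, mask (map Not s) a)) (snd (mask s a, mask (map Not s) a))) = f a"
      by simp
    show "(mask s a, mask (map Not s) a) \<in> sub_basis s \<times> sub_basis (map Not s)"
      using \<open>a \<in> qubits n\<close> ls by (auto simp: qubits_def sub_basis_def)
  next
    fix p assume p: "p \<in> sub_basis s \<times> sub_basis (map Not s)"
    then show "(mask s (mix s (fst p) (snd p)), mask (map Not s) (mix s (fst p) (snd p))) = p"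
      by (cases p) (auto simp: sub_basis_def qubits_def intro!: nth_equalityI)
    show "mix s (fst p) (snd p) \<in> qubits n"
      using p ls by (auto simp: sub_basis_def qubits_def)
  qed
  then show ?thesis by (simp add: sum.cartesian_product case_prod_unfold)
qed

lemma Yf_trace:
  assumes s: "s \<in> qubits n"
  shows "Yf n psi s = (\<Sum>a \<in> sub_basis s. \<Sum>a' \<in> sub_basis s. rho psi s a a' * rho psi s a' a)"
proof -
  have ls: "length s = n" using s by (simp add: qubits_def)
  let ?A = "sub_basis s" and ?B = "sub_basis (map Not s)"
  let ?m = "mix s"
  have mix1: "?m (?m a' b') (?m a b) = ?m a' b" and mix2: "?m (?m a b) (?m a' b') = ?m a b'"
    if "a \<in> ?A" "a' \<in> ?A" "b \<in> ?B" "b' \<in> ?B" for a a' b b'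
    using that ls by (auto simp: sub_basis_def qubits_def intro!: nth_equalityI)
  have "Yf n psi s = (\<Sum>x\<in>qubits n. \<Sum>y\<in>qubits n. psi x * psi y * cnj (psi (?m y x) * psi (?m x y)))"
    by (simp add: Yf_def sum.cartesian_product pp_def swap_pair_def case_prod_unfold)
  also have "\<dots> = (\<Sum>a\<in>?A. \<Sum>b\<in>?B. \<Sum>a'\<in>?A. \<Sum>b'\<in>?B.
      psi (?m a b) * psi (?m a' b') * cnj (psi (?m (?m a' b') (?m a b)) * psi (?m (?m a b) (?m a' b'))))"
    by (simp add: sum_split_sub[OF s])
  also have "\<dots> = (\<Sum>a\<in>?A. \<Sum>b\<in>?B. \<Sum>a'\<in>?A. \<Sum>b'\<in>?B.
      psi (?m a b) * psi (?m a' b') * cnj (psi (?m a' b) * psi (?m a b')))"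
    by (intro sum.cong refl) (simp add: mix1 mix2)
  also have "\<dots> = (\<Sum>a\<in>?A. \<Sum>a'\<in>?A. \<Sum>b\<in>?B. \<Sum>b'\<in>?B.
      psi (?m a b) * psi (?m a' b') * cnj (psi (?m a' b) * psi (?m a b')))"
    by (rule sum.cong[OF refl], rule sum.swap)
  also have "\<dots> = (\<Sum>a \<in> ?A. \<Sum>a' \<in> ?A. rho psi s a a' * rho psi s a' a)"
  proof -
    have "rho psi s a a' * rho psi s a' a = (\<Sum>b\<in>?B. \<Sum>b'\<in>?B.
      psi (?m a b) * psi (?m a' b') * cnj (psi (?m a' b) * psi (?m a b')))" for a a'
      unfolding rho_def sum_product by (simp add: algebra_simps)
    then show ?thesis by simp
  qed
  finally show ?thesis .
qed

lemma purity_Yf: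
  assumes s: "s \<in> qubits n"
  shows "Yf n psi s = of_real (purity psi s)"
  using Yf_of_real[OF s, of psi] Yf_trace[OF s, of psi] by (simp add: purity_def)



lemma xorl_zero_left: "z \<in> qubits n \<Longrightarrow> xorl (replicate n False) z = z"
  by (auto simp: qubits_def intro!: nth_equalityI)
lemma xorl_zero_right: "z \<in> qubits n \<Longrightarrow> xorl z (replicate n False) = z"
  by (auto simp: qubits_def intro!: nth_equalityI)

lemma cmod_sq_Re: "(cmod z)\<^sup>2 = Re (z * cnj z)"
  by (simp add: complex_mult_cnj cmod_power2)

lemma swap_test_final_eq:
  "swap_test_final psi s (x, r) = (psi_reg psi r + sgn_bit x * psi_reg psi (swap_t s r)) / 2"
proof -
  define c where "c = complex_of_real (sqrt 2)"
  have h0: "sqrt 2 * sqrt 2 = (2::real)" by simp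
  have h: "c * c = 2" unfolding c_def of_real_mult[symmetric] h0 by simp
  have 1: "had_anc (swap_test_init psi) = (\<lambda>(b, r). psi_reg psi r / c)"
    by (rule ext) (auto simp: had_anc_def swap_test_init_def c_def)
  have 2: "ctrl_swap s (\<lambda>(b, r). psi_reg psi r / c) = (\<lambda>(b, r). psi_reg psi (if b then swap_t s r else r) / c)"
    by (rule ext) (auto simp: ctrl_swap_def)
  have "swap_test_final psi s (x, r) = (psi_reg psi r / c + sgn_bit x * (psi_reg psi (swap_t s r) / c)) / c"
    unfolding swap_test_final_def 1 2 by (simp add: had_anc_def flip: c_def)
  also have "\<dots> = (psi_reg psi r + sgn_bit x * psi_reg psi (swap_t s r)) / (c * c)"
    by (simp add: add_divide_distrib divide_divide_eq_left)
  finally show ?thesis by (simp only: h)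
qed

lemma swap_sums:
  assumes norm: "(\<Sum>x \<in> qubits n. (cmod (psi x))\<^sup>2) = 1" and s: "s \<in> qubits n"
  shows "(\<Sum>r\<in>regs n t. psi_reg psi r * cnj (psi_reg psi r)) = 1"
    and "(\<Sum>r\<in>regs n t. psi_reg psi (swap_t s r) * cnj (psi_reg psi (swap_t s r))) = 1"
    and "(\<Sum>r\<in>regs n t. psi_reg psi r * cnj (psi_reg psi (swap_t s r))) = of_real (purity psi s ^ t)"
    and "(\<Sum>r\<in>regs n t. psi_reg psi (swap_t s r) * cnj (psi_reg psi r)) = of_real (purity psi s ^ t)"
proof -
  let ?z = "replicate n False"
  have e: "(\<Sum>r\<in>regs n t. psi_reg psi r * g r) = (\<Sum>r\<in>regs n t. psi_reg psi (swap_t ?z r) * g r)"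
    "(\<Sum>r\<in>regs n t. g r * cnj (psi_reg psi r)) = (\<Sum>r\<in>regs n t. g r * cnj (psi_reg psi (swap_t ?z r)))" for g
    by (auto intro!: sum.cong simp: swap_t_zero)
  show "(\<Sum>r\<in>regs n t. psi_reg psi r * cnj (psi_reg psi r)) = 1"
    using e(1)[of "\<lambda>r. cnj (psi_reg psi r)"] e(2)[of "\<lambda>r. psi_reg psi (swap_t ?z r)"]
      sum_regs_swap[of ?z n ?z psi t] xorl_self[of ?z n] Yf_zero[OF norm] by simp
  show "(\<Sum>r\<in>regs n t. psi_reg psi (swap_t s r) * cnj (psi_reg psi (swap_t s r))) = 1"
    using sum_regs_swap[OF s s, of psi t] xorl_self[OF s] Yf_zero[OF norm] by simp
  show "(\<Sum>r\<in>regs n t. psi_reg psi r * cnj (psi_reg psi (swap_t s r))) = of_real (purity psi s ^ t)"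
    using e(1)[of "\<lambda>r. cnj (psi_reg psi (swap_t s r))"]
      sum_regs_swap[OF zero_in s, of psi t] xorl_zero_left[OF s] purity_Yf[OF s] by simp
  show "(\<Sum>r\<in>regs n t. psi_reg psi (swap_t s r) * cnj (psi_reg psi r)) = of_real (purity psi s ^ t)"
    using e(2)[of "\<lambda>r. psi_reg psi (swap_t s r)"]
      sum_regs_swap[OF s zero_in, of psi t] xorl_zero_right[OF s] purity_Yf[OF s] by simp
qed

lemma expand_sq:
  "(a + sgn_bit x * b) * cnj (a + sgn_bit x * b) = a * cnj a + b * cnj b + sgn_bit x * (a * cnj b + b * cnj a)"
  by (cases x) (simp_all add: sgn_bit_def algebra_simps)

lemma swap_test_prob_eq:
  assumes norm: "(\<Sum>x \<in> qubits n. (cmod (psi x))\<^sup>2) = 1" and s: "s \<in> qubits n"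
  shows "swap_test_prob n t psi s x = (if x then (1 - purity psi s ^ t) / 2 else (1 + purity psi s ^ t) / 2)"
proof -
  let ?P = "\<lambda>r. psi_reg psi r" and ?Q = "\<lambda>r. psi_reg psi (swap_t s r)"
  have "swap_test_prob n t psi s x = (\<Sum>r\<in>regs n t. Re ((?P r + sgn_bit x * ?Q r) * cnj (?P r + sgn_bit x * ?Q r)) / 4)"
    unfolding swap_test_prob_def swap_test_final_eq cmod_sq_Re by (intro sum.cong refl) simp
  also have "\<dots> = Re (\<Sum>r\<in>regs n t. (?P r + sgn_bit x * ?Q r) * cnj (?P r + sgn_bit x * ?Q r)) / 4"
    by (simp only: sum_divide_distrib[symmetric] Re_sum)
  also have "(\<Sum>r\<in>regs n t. (?P r + sgn_bit x * ?Q r) * cnj (?P r + sgn_bit x * ?Q r))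
     = (\<Sum>r\<in>regs n t. ?P r * cnj (?P r)) + (\<Sum>r\<in>regs n t. ?Q r * cnj (?Q r))
      + sgn_bit x * ((\<Sum>r\<in>regs n t. ?P r * cnj (?Q r)) + (\<Sum>r\<in>regs n t. ?Q r * cnj (?P r)))"
    by (simp only: expand_sq sum.distrib sum_distrib_left[symmetric])
  also have "\<dots> = 1 + 1 + sgn_bit x * (of_real (purity psi s ^ t) + of_real (purity psi s ^ t))"
    by (simp only: swap_sums[OF norm s])
  finally have "swap_test_prob n t psi s x = Re (1 + 1 + sgn_bit x * (of_real (purity psi s ^ t) + of_real (purity psi s ^ t))) / 4" .
  then show ?thesis by (cases x) (simp_all add: sgn_bit_def)
qed



lemma card_qubits: "card (qubits n) = 2 ^ n"
proof -
  have "real (card (qubits n)) = 2 ^ n"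
  proof (induction n)
    case 0 then show ?case by (simp add: qubits_0)
  next
    case (Suc n)
    have "real (card (qubits (Suc n))) = (\<Sum>x\<in>qubits (Suc n). 1)" by simp
    also have "\<dots> = (\<Sum>d\<in>(UNIV::bool set). \<Sum>x\<in>qubits n. 1)" by (rule sum_qubits_Suc)
    also have "\<dots> = 2 * real (card (qubits n))" by (simp add: UNIV_bool)
    finally show ?case using Suc by simp
  qed
  then show ?thesis by (metis of_nat_eq_of_nat_power_cancel_iff of_nat_numeral)
qed

lemma sgn_bit_neq: "sgn_bit (a \<noteq> b) = sgn_bit a * sgn_bit b"
  by (simp add: sgn_bit_def)
lemma cnj_sgn_bit[simp]: "cnj (sgn_bit a) = sgn_bit a"
  by (simp add: sgn_bit_def)

lemma char_sum:
  "w \<in> qubits n \<Longrightarrow> (\<Sum>x\<in>qubits n. sgn_bit (dotb x w)) = (if w = replicate n False then of_real (2 ^ n) else 0)"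
proof (induction n arbitrary: w)
  case 0 then show ?case by (simp add: qubits_0 sgn_bit_def)
next
  case (Suc n)
  then obtain c w' where w: "w = c # w'" "w' \<in> qubits n" by (auto simp: qubits_Suc)
  have "(\<Sum>x\<in>qubits (Suc n). sgn_bit (dotb x w)) = (\<Sum>d\<in>(UNIV::bool set). \<Sum>x\<in>qubits n. sgn_bit (d \<and> c) * sgn_bit (dotb x w'))"
    by (simp only: sum_qubits_Suc w dotb_Cons sgn_bit_neq)
  also have "\<dots> = (\<Sum>d\<in>(UNIV::bool set). sgn_bit (d \<and> c)) * (\<Sum>x\<in>qubits n. sgn_bit (dotb x w'))"
    by (simp only: sum_product)
  also have "\<dots> = (if c then 0 else 2) * (if w' = replicate n False then of_real (2 ^ n) else 0)"
  proof -
    have sd: "(\<Sum>d\<in>(UNIV::bool set). sgn_bit (d \<and> c)) = (if c then 0 else 2)"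
      by (simp add: UNIV_bool sgn_bit_def)
    show ?thesis by (simp only: sd Suc.IH[OF w(2)])
  qed
  finally show ?case by (simp add: w)
qed

lemma indicator_sgn: "(if dotb x s = b then 1 else 0) = (1 + sgn_bit b * sgn_bit (dotb x s)) / (2::complex)"
  by (simp add: sgn_bit_def)

lemma C_sum:
  assumes s: "s \<in> qubits n" and z: "z \<in> qubits n"
  shows "(\<Sum>x\<in>{x\<in>qubits n. dotb x s = b}. sgn_bit (dotb x z))
    = of_real (2 ^ n) / 2 * ((if z = replicate n False then 1 else 0) + sgn_bit b * (if z = s then 1 else 0))"
proof -
  have "(\<Sum>x\<in>{x\<in>qubits n. dotb x s = b}. sgn_bit (dotb x z))
      = (\<Sum>x\<in>qubits n. (if dotb x s = b then sgn_bit (dotb x z) else 0))"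
    by (simp add: sum.inter_filter)
  also have "\<dots> = (\<Sum>x\<in>qubits n. (if dotb x s = b then 1 else 0) * sgn_bit (dotb x z))"
    by (intro sum.cong refl) simp
  also have "\<dots> = (\<Sum>x\<in>qubits n. (sgn_bit (dotb x z) + sgn_bit b * sgn_bit (dotb x (xorl s z))) / 2)"
    by (intro sum.cong refl) (auto simp: indicator_sgn dotb_xorl[OF _ s z] sgn_bit_def)
  also have "\<dots> = ((\<Sum>x\<in>qubits n. sgn_bit (dotb x z)) + sgn_bit b * (\<Sum>x\<in>qubits n. sgn_bit (dotb x (xorl s z)))) / 2"
    by (simp add: sum_divide_distrib[symmetric] sum.distrib sum_distrib_left)
  also have "\<dots> = of_real (2 ^ n) / 2 * ((if z = replicate n False then 1 else 0) + sgn_bit b * (if z = s then 1 else 0))"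
  proof -
    have a: "(\<Sum>x\<in>qubits n. sgn_bit (dotb x z)) = (if z = replicate n False then of_real (2 ^ n) else 0)"
      by (rule char_sum[OF z])
    have b: "(\<Sum>x\<in>qubits n. sgn_bit (dotb x (xorl s z))) = (if z = s then of_real (2 ^ n) else 0)"
      using char_sum[OF xorl_in[OF s z]] xorl_eq0[OF s z] by (metis (full_types))
    show ?thesis unfolding a b
      by (cases "z = replicate n False"; cases "z = s"; simp add: algebra_simps)
  qed
  finally show ?thesis .
qed



lemma hidden_cut_final_eq:
  "hidden_cut_final n psi (x, r) =
     (\<Sum>y\<in>qubits n. sgn_bit (dotb x y) * psi_reg psi (swap_t y r)) / of_real (2 ^ n)"
proof -
  define c where "c = complex_of_real (sqrt (2 ^ n))"
  have h0: "sqrt (2 ^ n) * sqrt (2 ^ n) = (2 ^ n :: real)" by simp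
  have h: "c * c = of_real (2 ^ n)" unfolding c_def of_real_mult[symmetric] h0 by simp
  have 1: "had_grp n (hidden_cut_init n psi) = (\<lambda>(g, r). psi_reg psi r / c)"
  proof (rule ext, clarify)
    fix g r
    have "(\<Sum>y\<in>qubits n. sgn_bit (dotb g y) * hidden_cut_init n psi (y, r))
        = (\<Sum>y\<in>qubits n. if y = replicate n False then psi_reg psi r else 0)"
      by (intro sum.cong refl) (simp add: hidden_cut_init_def sgn_bit_def)
    also have "\<dots> = psi_reg psi r" by simp
    finally show "had_grp n (hidden_cut_init n psi) (g, r) = psi_reg psi r / c"
      by (simp add: had_grp_def c_def)
  qed
  have 2: "ctrl_swap_grp (\<lambda>(g, r). psi_reg psi r / c) = (\<lambda>(g, r). psi_reg psi (swap_t g r) / c)"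
    by (rule ext) (auto simp: ctrl_swap_grp_def)
  have "hidden_cut_final n psi (x, r) = (\<Sum>y\<in>qubits n. sgn_bit (dotb x y) * (psi_reg psi (swap_t y r) / c)) / c"
    unfolding hidden_cut_final_def 1 2 by (simp add: had_grp_def flip: c_def)
  also have "\<dots> = (\<Sum>y\<in>qubits n. sgn_bit (dotb x y) * psi_reg psi (swap_t y r)) / (c * c)"
    by (simp add: sum_divide_distrib[symmetric] divide_divide_eq_left)
  finally show ?thesis by (simp only: h)
qed

lemma p_t_eq:
  assumes x: "x \<in> qubits n"
  shows "p_t n t psi x = Re (of_real (2 ^ n) * (\<Sum>z\<in>qubits n. sgn_bit (dotb x z) * Yf n psi z ^ t)) / (2 ^ n * 2 ^ n)"
proof -
  let ?D = "complex_of_real (2 ^ n)"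
  let ?H = "\<lambda>r. (\<Sum>y\<in>qubits n. sgn_bit (dotb x y) * psi_reg psi (swap_t y r))"
  have "p_t n t psi x = (\<Sum>r\<in>regs n t. Re (?H r / ?D * cnj (?H r / ?D)))"
    using x by (simp add: p_t_def hidden_cut_final_eq cmod_sq_Re)
  also have "\<dots> = Re (\<Sum>r\<in>regs n t. ?H r * cnj (?H r)) / (2 ^ n * 2 ^ n)"
    by (simp add: Re_sum sum_divide_distrib[symmetric] Re_divide_of_real)
  also have "(\<Sum>r\<in>regs n t. ?H r * cnj (?H r)) = (\<Sum>r\<in>regs n t. \<Sum>y\<in>qubits n. \<Sum>y'\<in>qubits n.
       sgn_bit (dotb x y) * sgn_bit (dotb x y') * (psi_reg psi (swap_t y r) * cnj (psi_reg psi (swap_t y' r))))"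
    by (simp add: sum_product cnj_sum mult_ac)
  also have "\<dots> = (\<Sum>y\<in>qubits n. \<Sum>y'\<in>qubits n.
       sgn_bit (dotb x y) * sgn_bit (dotb x y') * (\<Sum>r\<in>regs n t. psi_reg psi (swap_t y r) * cnj (psi_reg psi (swap_t y' r))))"
    by (simp add: sum_distrib_left sum.swap[of _ "regs n t"])
  also have "\<dots> = (\<Sum>y\<in>qubits n. \<Sum>y'\<in>qubits n. sgn_bit (dotb x (xorl y y')) * Yf n psi (xorl y y') ^ t)"
    by (intro sum.cong refl) (simp add: sum_regs_swap dotb_xorl[OF x] sgn_bit_def)
  also have "\<dots> = (\<Sum>y\<in>qubits n. \<Sum>z\<in>qubits n. sgn_bit (dotb x z) * Yf n psi z ^ t)"
    by (rule sum.cong[OF refl], rule sum_xorl_reindex[where F = "\<lambda>z. sgn_bit (dotb x z) * Yf n psi z ^ t"], assumption)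
  also have "\<dots> = ?D * (\<Sum>z\<in>qubits n. sgn_bit (dotb x z) * Yf n psi z ^ t)"
    by (simp add: card_qubits)
  finally show ?thesis .
qed



lemma hidden_sum:
  assumes norm: "(\<Sum>x \<in> qubits n. (cmod (psi x))\<^sup>2) = 1" and s: "s \<in> qubits n"
  shows "(\<Sum>x\<in>{x\<in>qubits n. dotb x s = b}. p_t n t psi x) =
     (if b then (1 - purity psi s ^ t) / 2 else (1 + purity psi s ^ t) / 2)"
proof -
  let ?D = "complex_of_real (2 ^ n)"
  let ?F = "{x\<in>qubits n. dotb x s = b}"
  let ?Z = "replicate n False"
  have "(\<Sum>x\<in>?F. p_t n t psi x) = (\<Sum>x\<in>?F. Re (?D * (\<Sum>z\<in>qubits n. sgn_bit (dotb x z) * Yf n psi z ^ t)) / (2 ^ n * 2 ^ n))"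
    by (intro sum.cong refl) (simp add: p_t_eq)
  also have "\<dots> = Re (?D * (\<Sum>z\<in>qubits n. (\<Sum>x\<in>?F. sgn_bit (dotb x z)) * Yf n psi z ^ t)) / (2 ^ n * 2 ^ n)"
    by (simp add: sum_divide_distrib[symmetric] Re_sum[symmetric] sum_distrib_left sum_distrib_right sum.swap[of _ ?F])
  also have "(\<Sum>z\<in>qubits n. (\<Sum>x\<in>?F. sgn_bit (dotb x z)) * Yf n psi z ^ t)
      = (\<Sum>z\<in>qubits n. ?D / 2 * ((if z = ?Z then Yf n psi z ^ t else 0) + sgn_bit b * (if z = s then Yf n psi z ^ t else 0)))"
    by (intro sum.cong refl) (simp add: C_sum[OF s] algebra_simps)
  also have "\<dots> = ?D / 2 * (Yf n psi ?Z ^ t + sgn_bit b * Yf n psi s ^ t)"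
  proof -
    have "(\<Sum>z\<in>qubits n. ?D / 2 * ((if z = ?Z then Yf n psi z ^ t else 0) + sgn_bit b * (if z = s then Yf n psi z ^ t else 0)))
      = ?D / 2 * ((\<Sum>z\<in>qubits n. if z = ?Z then Yf n psi z ^ t else 0) + sgn_bit b * (\<Sum>z\<in>qubits n. if z = s then Yf n psi z ^ t else 0))"
      by (simp only: sum_distrib_left[symmetric] sum.distrib)
    also have "\<dots> = ?D / 2 * (Yf n psi ?Z ^ t + sgn_bit b * Yf n psi s ^ t)"
      using s by (simp only: sum.delta finite_qubits zero_in if_True)
    finally show ?thesis .
  qed
  also have "\<dots> = ?D / 2 * (1 + sgn_bit b * of_real (purity psi s ^ t))"
    by (simp add: Yf_zero[OF norm] purity_Yf[OF s])
  finally have eq: "(\<Sum>x\<in>?F. p_t n t psi x) = Re (?D * (?D / 2 * (1 + sgn_bit b * of_real (purity psi s ^ t)))) / (2 ^ n * 2 ^ n)" .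
  show ?thesis
  proof (cases b)
    case True
    have "?D * (?D / 2 * (1 + sgn_bit b * of_real (purity psi s ^ t))) = of_real (2 ^ n * 2 ^ n * ((1 - purity psi s ^ t) / 2))"
      using True by (simp add: sgn_bit_def field_simps)
    then show ?thesis using eq True by simp
  next
    case False
    have "?D * (?D / 2 * (1 + sgn_bit b * of_real (purity psi s ^ t))) = of_real (2 ^ n * 2 ^ n * ((1 + purity psi s ^ t) / 2))"
      using False by (simp add: sgn_bit_def field_simps)
    then show ?thesis using eq False by (simp add: sgn_bit_def)
  qed
qed



theorem mainTheorem9:
  fixes n t :: nat and psi :: "bool list \<Rightarrow> complex" and s :: "bool list"
  assumes norm: "(\<Sum>x \<in> qubits n. (cmod (psi x))\<^sup>2) = 1"
    and t: "t \<ge> 1"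
    and s: "s \<in> qubits n"
  shows "(\<forall>x. swap_test_prob n t psi s x =
             (if x then (1 - purity psi s ^ t) / 2 else 1 - (1 - purity psi s ^ t) / 2))
    \<and> (\<forall>b. swap_test_prob n t psi s b = (\<Sum>x \<in> {x \<in> qubits n. dotb x s = b}. p_t n t psi x))
    \<and> (\<forall>m::nat. m \<ge> 1 \<longrightarrow>
          map_pmf (\<lambda>X. 1 - 2 / real m * (\<Sum>k \<in> {1..m}. of_bool (X k)))
                  (Pi_pmf {1..m} False (\<lambda>_. swap_test_pmf n t psi s))
        = map_pmf (\<lambda>X. 1 - 2 / real m * (\<Sum>k \<in> {1..m}. of_bool (dotb (X k) s)))
                  (Pi_pmf {1..m} [] (\<lambda>_. p_t_pmf n t psi)))"
proof -
  let ?P = "purity psi s ^ t"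
  have P1: "\<forall>x. swap_test_prob n t psi s x =
             (if x then (1 - ?P) / 2 else 1 - (1 - ?P) / 2)"
    using swap_test_prob_eq[OF norm s] by (auto simp: field_simps)
  have P2: "\<forall>b. swap_test_prob n t psi s b = (\<Sum>x \<in> {x \<in> qubits n. dotb x s = b}. p_t n t psi x)"
    using swap_test_prob_eq[OF norm s] hidden_sum[OF norm s] by simp
  have st_nonneg: "0 \<le> swap_test_prob n t psi s x" for x
    unfolding swap_test_prob_def by (intro sum_nonneg) simp
  have st_sum: "swap_test_prob n t psi s True + swap_test_prob n t psi s False = 1"
    using swap_test_prob_eq[OF norm s] by (simp add: field_simps)
  have st_int: "(\<integral>\<^sup>+x. ennreal (swap_test_prob n t psi s x) \<partial>count_space UNIV) = 1"
    using st_sum st_nonneg by (simp add: nn_integral_count_space_finite UNIV_bool ennreal_plus[symmetric] del: ennreal_plus)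
  have pmf_st: "pmf (swap_test_pmf n t psi s) x = swap_test_prob n t psi s x" for x
    unfolding swap_test_pmf_def using st_nonneg st_int by (rule pmf_embed_pmf)
  have pt_nonneg: "0 \<le> p_t n t psi x" for x
    unfolding p_t_def by (auto intro!: sum_nonneg)
  have qsplit: "qubits n = {x \<in> qubits n. dotb x s = True} \<union> {x \<in> qubits n. dotb x s = False}" by auto
  have pt_sum: "(\<Sum>x\<in>qubits n. p_t n t psi x) = 1"
  proof -
    have "(\<Sum>x\<in>qubits n. p_t n t psi x) = (\<Sum>x\<in>{x \<in> qubits n. dotb x s = True}. p_t n t psi x) + (\<Sum>x\<in>{x \<in> qubits n. dotb x s = False}. p_t n t psi x)"
      by (subst qsplit, rule sum.union_disjoint) auto
    then show ?thesis using P2 st_sum by simp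
  qed
  have pt_int: "(\<integral>\<^sup>+x. ennreal (p_t n t psi x) \<partial>count_space UNIV) = 1"
  proof -
    have "(\<integral>\<^sup>+x. ennreal (p_t n t psi x) \<partial>count_space UNIV) = (\<Sum>x\<in>qubits n. ennreal (p_t n t psi x))"
      by (rule nn_integral_count_space') (auto simp: p_t_def)
    also have "\<dots> = ennreal (\<Sum>x\<in>qubits n. p_t n t psi x)"
      using pt_nonneg by (simp add: sum_ennreal)
    finally show ?thesis using pt_sum by simp
  qed
  have pmf_pt: "pmf (p_t_pmf n t psi) x = p_t n t psi x" for x
    unfolding p_t_pmf_def using pt_nonneg pt_int by (rule pmf_embed_pmf)
  have set_pt: "set_pmf (p_t_pmf n t psi) \<subseteq> qubits n"
    by (auto simp: set_pmf_eq pmf_pt p_t_def)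
  have map_eq: "swap_test_pmf n t psi s = map_pmf (\<lambda>x. dotb x s) (p_t_pmf n t psi)"
  proof (rule pmf_eqI)
    fix b
    let ?M = "measure_pmf (p_t_pmf n t psi)"
    have "measure ?M ((\<lambda>x. dotb x s) -` {b}) = measure ?M ((\<lambda>x. dotb x s) -` {b} \<inter> set_pmf (p_t_pmf n t psi))"
      by (rule measure_Int_set_pmf[symmetric])
    also have "(\<lambda>x. dotb x s) -` {b} \<inter> set_pmf (p_t_pmf n t psi) = {x \<in> qubits n. dotb x s = b} \<inter> set_pmf (p_t_pmf n t psi)"
      using set_pt by auto
    also have "measure ?M \<dots> = measure ?M {x \<in> qubits n. dotb x s = b}"
      by (rule measure_Int_set_pmf)
    also have "\<dots> = (\<Sum>x \<in> {x \<in> qubits n. dotb x s = b}. p_t n t psi x)"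
      by (simp add: measure_measure_pmf_finite pmf_pt)
    finally show "pmf (swap_test_pmf n t psi s) b = pmf (map_pmf (\<lambda>x. dotb x s) (p_t_pmf n t psi)) b"
      by (simp add: pmf_map pmf_st P2)
  qed
  have P3: "map_pmf (\<lambda>X. 1 - 2 / real m * (\<Sum>k \<in> {1..m}. of_bool (X k)))
                  (Pi_pmf {1..m} False (\<lambda>_. swap_test_pmf n t psi s))
        = map_pmf (\<lambda>X. 1 - 2 / real m * (\<Sum>k \<in> {1..m}. of_bool (dotb (X k) s)))
                  (Pi_pmf {1..m} [] (\<lambda>_. p_t_pmf n t psi))" for m :: nat
  proof -
    have "Pi_pmf {1..m} False (\<lambda>_. swap_test_pmf n t psi s)
        = map_pmf (\<lambda>h. (\<lambda>x. dotb x s) \<circ> h) (Pi_pmf {1..m} [] (\<lambda>_. p_t_pmf n t psi))"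
      unfolding map_eq by (rule Pi_pmf_map) simp_all
    then show ?thesis by (simp add: map_pmf_comp o_def)
  qed
  show ?thesis using P1 P2 P3 by blast
qed

end
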